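(* Let $G_1=(V_1,E_1)$ and $G_2=(V_2,E_2)$ be finite simple graphs with $G_1$ a minor of $G_2$, obtained from $G_2$ by deleting the edge set $E_2^d$ and contracting the edge set $E_2^c$ as described in the context. Let $A$ be an incidence matrix on $\mathcal D(G_2)$ such that $A_{d_1,d_2}=0$ whenever $d_1$ or $d_2$ is a dart $(v,e)$ with $e\in E_2^d$. Let $K$ be the set of darts $(v,e)\in V_{\mathcal D}(G_2)$ with $e\in E_2^c\cup E_2^d$ and $\bar K=V_{\mathcal D}(G_2)\setminus K$. Then $\bar K$ can be identified with $V_{\mathcal D}(G_1)$ (via $(x,e)\mapsto$ (image of $x$, image of $e$)), and the antisymmetric matrix $A^{\bar K}$ indexed by $\bar K$ with entries $(A^{\bar K})_{i,j}=-(A^{\bar K})_{j,i}=\operatorname{Pf}(A_{K\cup\{i,j\}})$ for $i<j$ in $\bar K$ is an incidence matrix on $\mathcal D(G_1)$.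
   Context: The dart graph $\mathcal D(G)$ of $G=(V,E)$ has vertex set $V_{\mathcal D}(G)=\{(v,e)\in V\times E: v\text{ incident with }e\}$, two distinct darts $(v,e),(v',e')$ being adjacent iff $v=v'$ or $e=e'$. Fix a total order on $V_{\mathcal D}(G_2)$; subsets of indices carry the induced order. An incidence matrix on $\mathcal D(G)$ is an antisymmetric complex matrix indexed by $V_{\mathcal D}(G)$ with $A_{d,d'}=0$ whenever $\{d,d'\}$ is not an edge of $\mathcal D(G)$. For a set of indices $L$, $A_L=(A_{i,j})_{i,j\in L}$ is the principal submatrix, and $\operatorname{Pf}$ is the Pfaffian. Minor transformation: $E_2^d,E_2^c\subseteq E_2$ are disjoint, $(V_2,E_2^c)$ contains no cycle, each connected component of $(V_2,E_2^c)$ is contracted to a single vertex of $G_1$ (a surjection $V_2\to V_1$), and the edges of $E_2\setminus(E_2^c\cup E_2^d)$ correspond bijectively to $E_1$, an edge $\{x,y\}$ corresponding to the edge of $G_1$ joining the images of $x$ and $y$. *)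

theory Defs
  imports Complex_Main "HOL-Combinatorics.Permutations"
begin

definition simple_graph :: "'v set \<Rightarrow> 'v set set \<Rightarrow> bool" where
  "simple_graph V E \<longleftrightarrow> finite V \<and>
     (\<forall>e\<in>E. \<exists>x y. x \<noteq> y \<and> x \<in> V \<and> y \<in> V \<and> e = {x, y})"

definition has_cycle :: "'v set \<Rightarrow> 'v set set \<Rightarrow> bool" where
  "has_cycle V F \<longleftrightarrow> (\<exists>vs. length vs \<ge> 3 \<and> distinct vs \<and> set vs \<subseteq> V \<and>
     (\<forall>i<length vs. {vs ! i, vs ! ((i + 1) mod length vs)} \<in> F))"

definition same_component :: "'v set \<Rightarrow> 'v set set \<Rightarrow> 'v \<Rightarrow> 'v \<Rightarrow> bool" where
  "same_component V F x y \<longleftrightarrow>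
     (x, y) \<in> ({(a, b). a \<in> V \<and> b \<in> V \<and> {a, b} \<in> F})\<^sup>*"

definition minor_transformation ::
  "'v set \<Rightarrow> 'v set set \<Rightarrow> 'w set \<Rightarrow> 'w set set \<Rightarrow> 'v set set \<Rightarrow> 'v set set \<Rightarrow> ('v \<Rightarrow> 'w) \<Rightarrow> bool" where
  "minor_transformation V2 E2 V1 E1 Ed Ec phi \<longleftrightarrow>
     Ed \<subseteq> E2 \<and> Ec \<subseteq> E2 \<and> Ed \<inter> Ec = {} \<and>
     \<not> has_cycle V2 Ec \<and>
     phi ` V2 = V1 \<and>
     (\<forall>x\<in>V2. \<forall>y\<in>V2. phi x = phi y \<longleftrightarrow> same_component V2 Ec x y) \<and>
     bij_betw (\<lambda>e. phi ` e) (E2 - (Ec \<union> Ed)) E1"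

definition darts :: "'v set \<Rightarrow> 'v set set \<Rightarrow> ('v \<times> 'v set) set" where
  "darts V E = {(v, e). v \<in> V \<and> e \<in> E \<and> v \<in> e}"

definition dart_adj :: "('v \<times> 'v set) \<Rightarrow> ('v \<times> 'v set) \<Rightarrow> bool" where
  "dart_adj d d' \<longleftrightarrow> d \<noteq> d' \<and> (fst d = fst d' \<or> snd d = snd d')"

definition incidence_matrix ::
  "'v set \<Rightarrow> 'v set set \<Rightarrow> (('v \<times> 'v set) \<Rightarrow> ('v \<times> 'v set) \<Rightarrow> complex) \<Rightarrow> bool" where
  "incidence_matrix V E A \<longleftrightarrow>
     (\<forall>d\<in>darts V E. \<forall>d'\<in>darts V E. A d d' = - A d' d) \<and>
     (\<forall>d\<in>darts V E. \<forall>d'\<in>darts V E. \<not> dart_adj d d' \<longrightarrow> A d d' = 0)"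

text \<open>The total order on indices is given by an injective rank function r (d < d' iff r d < r d').
  pf r A L is the Pfaffian of the principal submatrix A_L with the induced order:
  Pf = 1/(2^n n!) * sum over sigma in S_2n of sgn(sigma) * prod_i A(x_sigma(2i), x_sigma(2i+1)),
  where x_0 < ... < x_(2n-1) lists L in increasing order; 0 if card L is odd.\<close>
definition pf :: "('a \<Rightarrow> nat) \<Rightarrow> ('a \<Rightarrow> 'a \<Rightarrow> complex) \<Rightarrow> 'a set \<Rightarrow> complex" where
  "pf r A L = (let xs = sorted_key_list_of_set r L; m = card L; n = m div 2 in
     if odd m then 0 else
     (1 / (2 ^ n * fact n)) *
       (\<Sum>\<sigma>\<in>{\<sigma>. \<sigma> permutes {..<m}}.
          of_int (sign \<sigma>) * (\<Prod>i<n. A (xs ! \<sigma> (2 * i)) (xs ! \<sigma> (2 * i + 1)))))"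

definition pf_reduced :: "('a \<Rightarrow> nat) \<Rightarrow> ('a \<Rightarrow> 'a \<Rightarrow> complex) \<Rightarrow> 'a set \<Rightarrow> 'a \<Rightarrow> 'a \<Rightarrow> complex" where
  "pf_reduced r A K i j =
     (if r i < r j then pf r A (K \<union> {i, j})
      else if r j < r i then - pf r A (K \<union> {i, j}) else 0)"

end

theory Submission imports Defs begin

context linorder
begin

lemma skl_facts:
  assumes "inj_on f L" "finite L"
  shows "set (sorted_key_list_of_set f L) = L \<and> distinct (sorted_key_list_of_set f L)
     \<and> length (sorted_key_list_of_set f L) = card L"
proof -
  interpret folding_insort_key "(\<le>)" "(<)" L f
    by unfold_locales (rule assms(1))
  show ?thesis
  proof (intro conjI)
    show "set (sorted_key_list_of_set f L) = L"
      by (rule set_sorted_key_list_of_set[OF subset_refl assms(2)])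
    show "distinct (sorted_key_list_of_set f L)"
      by (rule distinct_if_distinct_map[OF distinct_sorted_key_list_of_set[OF subset_refl]])
    show "length (sorted_key_list_of_set f L) = card L"
      by (rule length_sorted_key_list_of_set[OF subset_refl])
  qed
qed

end

lemma skl:
  fixes r :: "'a \<Rightarrow> nat"
  assumes "inj_on r L" "finite L"
  shows "set (sorted_key_list_of_set r L) = L \<and> distinct (sorted_key_list_of_set r L)
     \<and> length (sorted_key_list_of_set r L) = card L"
  by (rule skl_facts[OF assms])

lemma card_less_Suc_filter:
  "card {t. t < Suc m \<and> P t} = card {t. t < m \<and> P t} + (if P m then 1 else 0)"
proof -
  have fin: "finite {t. t < m \<and> P t}" by simp
  have nm: "m \<notin> {t. t < m \<and> P t}" by simp
  have eq: "{t. t < Suc m \<and> P t} = {t. t < m \<and> P t} \<union> {t. t = m \<and> P t}"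
    unfolding less_Suc_eq by blast
  show ?thesis
  proof (cases "P m")
    case True
    then have "{t. t < Suc m \<and> P t} = insert m {t. t < m \<and> P t}" using eq by blast
    then show ?thesis using fin nm True by simp
  next
    case False
    then have "{t. t < Suc m \<and> P t} = {t. t < m \<and> P t}" using eq by blast
    then show ?thesis using False by simp
  qed
qed

lemma even_card_pairs:
  fixes n :: nat and P :: "nat \<Rightarrow> bool"
  assumes "\<forall>k<n. P (2*k) = P (2*k+1)"
  shows "even (card {t. t < 2*n \<and> P t})"
  using assms
proof (induction n)
  case 0 then show ?case by simp
next
  case (Suc n)
  have IH: "even (card {t. t < 2*n \<and> P t})" using Suc by auto
  have e: "P (2*n) = P (Suc (2*n))" using Suc.prems by simp
  have "2 * Suc n = Suc (Suc (2*n))" by simp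
  then have "card {t. t < 2 * Suc n \<and> P t} = card {t. t < 2*n \<and> P t}
      + (if P (2*n) then 1 else 0) + (if P (Suc (2*n)) then 1 else 0)"
    by (simp only: card_less_Suc_filter)
  then show ?case using IH e by simp
qed

lemma pf_zero:
  fixes r :: "'a \<Rightarrow> nat"
  assumes "finite L" "inj_on r L"
    and "\<And>g. bij_betw g {..<card L} L \<Longrightarrow> even (card L) \<Longrightarrow>
           \<exists>k<card L div 2. A (g (2*k)) (g (2*k+1)) = 0"
  shows "pf r A L = 0"
proof -
  define xs where "xs = sorted_key_list_of_set r L"
  have xs: "set xs = L" "distinct xs" "length xs = card L"
    using skl[OF assms(2,1)] xs_def by auto
  show ?thesis
  proof (cases "odd (card L)")
    case True then show ?thesis by (simp add: pf_def Let_def)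
  next
    case False
    have "(\<Sum>\<sigma>\<in>{\<sigma>. \<sigma> permutes {..<card L}}.
          of_int (sign \<sigma>) * (\<Prod>i<card L div 2. A (xs ! \<sigma> (2 * i)) (xs ! \<sigma> (2 * i + 1)))) = 0"
    proof (rule sum.neutral, rule ballI)
      fix \<sigma> assume "\<sigma> \<in> {\<sigma>. \<sigma> permutes {..<card L}}"
      then have "bij_betw \<sigma> {..<card L} {..<card L}" by (simp add: permutes_imp_bij)
      moreover have "bij_betw ((!) xs) {..<card L} L" using xs by (intro bij_betw_nth) auto
      ultimately have "bij_betw (\<lambda>t. xs ! \<sigma> t) {..<card L} L"
        using bij_betw_trans[of \<sigma>] by (simp add: comp_def)
      then obtain k where "k < card L div 2" "A (xs ! \<sigma> (2*k)) (xs ! \<sigma> (2*k+1)) = 0"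
        using assms(3) False by blast
      then have "(\<Prod>i<card L div 2. A (xs ! \<sigma> (2 * i)) (xs ! \<sigma> (2 * i + 1))) = 0"
        by (intro prod_zero) auto
      then show "of_int (sign \<sigma>) * (\<Prod>i<card L div 2. A (xs ! \<sigma> (2 * i)) (xs ! \<sigma> (2 * i + 1))) = 0"
        by simp
    qed
    then show ?thesis using False by (simp add: pf_def Let_def xs_def)
  qed
qed


lemma pf_reduced_antisym: "pf_reduced r A K i j = - pf_reduced r A K j i"
  unfolding pf_reduced_def by (simp add: insert_commute)

theorem proposition2p13:
  fixes V1 :: "'w set" and E1 :: "'w set set"
    and V2 :: "'v set" and E2 :: "'v set set"
    and Ed Ec :: "'v set set" and phi :: "'v \<Rightarrow> 'w"
    and r :: "('v \<times> 'v set) \<Rightarrow> nat"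
    and A :: "('v \<times> 'v set) \<Rightarrow> ('v \<times> 'v set) \<Rightarrow> complex"
  assumes G1: "simple_graph V1 E1"
    and G2: "simple_graph V2 E2"
    and minor: "minor_transformation V2 E2 V1 E1 Ed Ec phi"
    and order: "inj_on r (darts V2 E2)"
    and inc: "incidence_matrix V2 E2 A"
    and del0: "\<forall>d1\<in>darts V2 E2. \<forall>d2\<in>darts V2 E2.
                 snd d1 \<in> Ed \<or> snd d2 \<in> Ed \<longrightarrow> A d1 d2 = 0"
  defines "K \<equiv> {d \<in> darts V2 E2. snd d \<in> Ec \<union> Ed}"
    and "Kbar \<equiv> {d \<in> darts V2 E2. snd d \<notin> Ec \<union> Ed}"
    and "f \<equiv> (\<lambda>(x, e). (phi x, phi ` e))"
  shows "bij_betw f Kbar (darts V1 E1) \<and>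
         incidence_matrix V1 E1
           (\<lambda>d d'. pf_reduced r A K (inv_into Kbar f d) (inv_into Kbar f d'))"
proof -
  note mt = minor[unfolded minor_transformation_def]
  have Ed: "Ed \<subseteq> E2" using mt by blast
  have Ec: "Ec \<subseteq> E2" using mt by blast
  have phiV: "phi ` V2 = V1" using mt by blast
  have comp: "\<forall>x\<in>V2. \<forall>y\<in>V2. phi x = phi y \<longleftrightarrow> same_component V2 Ec x y"
    using mt by blast
  have bE: "bij_betw (\<lambda>e. phi ` e) (E2 - (Ec \<union> Ed)) E1" using mt by blast
  have E2e: "\<And>e. e \<in> E2 \<Longrightarrow> \<exists>a b. a \<noteq> b \<and> a \<in> V2 \<and> b \<in> V2 \<and> e = {a, b}"
    using G2 unfolding simple_graph_def by auto
  have E1e: "\<And>e. e \<in> E1 \<Longrightarrow> \<exists>a b. a \<noteq> b \<and> e = {a, b}"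
    using G1 unfolding simple_graph_def by blast
  have finV2: "finite V2" using G2 unfolding simple_graph_def by auto
  have E2sub: "E2 \<subseteq> Pow V2" using E2e by blast
  have finE2: "finite E2" using finite_subset[OF E2sub] finV2 by simp
  have finD: "finite (darts V2 E2)"
    by (rule finite_subset[of _ "V2 \<times> E2"]) (auto simp: darts_def finV2 finE2)
  have ecphi: "phi a = phi b" if hc: "c \<in> Ec" and ha: "a \<in> c" and hb: "b \<in> c" for c a b
  proof -
    obtain u v where uv: "u \<noteq> v" "u \<in> V2" "v \<in> V2" "c = {u, v}" using E2e hc Ec by blast
    have "same_component V2 Ec u v" unfolding same_component_def
      using uv hc by (intro r_into_rtrancl) auto
    then have "phi u = phi v" using comp uv by auto
    then show ?thesis using ha hb uv by auto
  qed
  have phi_e: "phi a \<noteq> phi b" if he: "e \<in> E2 - (Ec \<union> Ed)" and ha: "a \<in> e" and hb: "b \<in> e" and hab: "a \<noteq> b" for e a b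
  proof
    assume h: "phi a = phi b"
    obtain u v where uv: "u \<noteq> v" "e = {u, v}" using E2e he by blast
    have "phi ` e \<in> E1" using bE he bij_betwE by blast
    then obtain p q where pq: "p \<noteq> q" "phi ` e = {p, q}" using E1e by blast
    have "phi ` e = {phi a}" using h ha hb hab uv by auto
    then show False using pq by auto
  qed
  have inj_f: "inj_on f Kbar"
  proof (rule inj_onI)
    fix a b assume a: "a \<in> Kbar" and b: "b \<in> Kbar" and fab: "f a = f b"
    obtain x e where ax: "a = (x, e)" by (cases a)
    obtain y e' where by': "b = (y, e')" by (cases b)
    have e: "e \<in> E2 - (Ec \<union> Ed)" "x \<in> e" using a ax unfolding Kbar_def darts_def by auto
    have e': "e' \<in> E2 - (Ec \<union> Ed)" "y \<in> e'" using b by' unfolding Kbar_def darts_def by auto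
    have "phi ` e = phi ` e'" "phi x = phi y" using fab ax by' unfolding f_def by auto
    then have "e = e'" using bE e e' unfolding bij_betw_def by (auto dest: inj_onD)
    then have "x = y" using phi_e[OF e(1) e(2)] e' \<open>phi x = phi y\<close> by auto
    then show "a = b" using ax by' \<open>e = e'\<close> by simp
  qed
  have img_f: "f ` Kbar = darts V1 E1"
  proof
    show "f ` Kbar \<subseteq> darts V1 E1"
    proof
      fix d assume "d \<in> f ` Kbar"
      then obtain x e where xe: "(x, e) \<in> Kbar" "d = (phi x, phi ` e)" unfolding f_def by auto
      then have "x \<in> V2" "e \<in> E2 - (Ec \<union> Ed)" "x \<in> e" unfolding Kbar_def darts_def by auto
      then show "d \<in> darts V1 E1" using xe phiV bE bij_betwE unfolding darts_def by blast
    qed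
  next
    show "darts V1 E1 \<subseteq> f ` Kbar"
    proof
      fix d assume "d \<in> darts V1 E1"
      then obtain w e1 where d: "d = (w, e1)" "e1 \<in> E1" "w \<in> e1" unfolding darts_def by auto
      then obtain e where e: "e \<in> E2 - (Ec \<union> Ed)" "e1 = phi ` e"
        using bE unfolding bij_betw_def by auto
      then obtain x where x: "x \<in> e" "w = phi x" using d by auto
      have "x \<in> V2" using e x E2sub by auto
      then have "(x, e) \<in> Kbar" using e x unfolding Kbar_def darts_def by auto
      moreover have "f (x, e) = d" using d e x unfolding f_def by auto
      ultimately show "d \<in> f ` Kbar" by force
    qed
  qed
  have bij: "bij_betw f Kbar (darts V1 E1)" using inj_f img_f unfolding bij_betw_def by simp
  have inv1a: "inv_into Kbar f d \<in> Kbar" if "d \<in> darts V1 E1" for d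
    by (rule inv_into_into) (simp add: img_f that)
  have inv1b: "f (inv_into Kbar f d) = d" if "d \<in> darts V1 E1" for d
    by (rule f_inv_into_f) (simp add: img_f that)
  have KD: "K \<subseteq> darts V2 E2" "Kbar \<subseteq> darts V2 E2" unfolding K_def Kbar_def by auto
  have main: "pf r A (K \<union> {i, j}) = 0"
    if i: "i \<in> Kbar" and j: "j \<in> Kbar" and neq: "phi (fst i) \<noteq> phi (fst j)" "snd i \<noteq> snd j" for i j
  proof -
    define L where "L = K \<union> {i, j}"
    have LD: "L \<subseteq> darts V2 E2" using KD i j unfolding L_def by auto
    have finL: "finite L" using LD finD finite_subset by blast
    have injL: "inj_on r L" using order LD inj_on_subset by blast
    show ?thesis unfolding L_def[symmetric]
    proof (rule pf_zero[OF finL injL])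
      fix g assume g: "bij_betw g {..<card L} L" and ev: "even (card L)"
      define n where "n = card L div 2"
      have cL: "card L = 2 * n" using ev n_def by simp
      show "\<exists>k<card L div 2. A (g (2*k)) (g (2*k+1)) = 0"
      proof (rule ccontr)
        assume "\<not> ?thesis"
        then have nz: "\<And>k. k < n \<Longrightarrow> A (g (2*k)) (g (2*k+1)) \<noteq> 0" unfolding n_def by auto
        have ginj: "inj_on g {..<2*n}" using g cL unfolding bij_betw_def by simp
        have gim: "g ` {..<2*n} = L" using g cL unfolding bij_betw_def by simp
        have gL: "g t \<in> L" if "t < 2*n" for t using gim that by blast
        have noEd: "snd l \<notin> Ed" if hl: "l \<in> L" for l
        proof
          assume le: "snd l \<in> Ed"
          obtain t where t: "t < 2*n" "g t = l" using gim hl by auto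
          define k where "k = t div 2"
          have k: "k < n" using t k_def by simp
          have "t = 2*k \<or> t = 2*k+1" unfolding k_def by auto
          moreover have "g (2*k) \<in> darts V2 E2" "g (2*k+1) \<in> darts V2 E2" using gL k LD by auto
          moreover have "l \<in> darts V2 E2" using hl LD by auto
          ultimately have "A (g (2*k)) (g (2*k+1)) = 0" using del0 le t by auto
          then show False using nz k by simp
        qed
        define P where "P = (\<lambda>l::'v \<times> 'v set. phi (fst l) = phi (fst i))"
        have block: "\<forall>k<n. P (g (2*k)) = P (g (2*k+1))"
        proof (intro allI impI)
          fix k assume k: "k < n"
          define a where "a = g (2*k)"
          define b where "b = g (2*k+1)"
          have aL: "a \<in> L" and bL: "b \<in> L" using gL k unfolding a_def b_def by auto
          have kk: "2*k \<in> {..<2*n}" "2*k+1 \<in> {..<2*n}" using k by auto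
          have ab: "a \<noteq> b"
          proof
            assume "a = b"
            then have "2*k = 2*k+1" using inj_onD[OF ginj _ kk] unfolding a_def b_def by blast
            then show False by simp
          qed
          have Anz: "A a b \<noteq> 0" using nz k unfolding a_def b_def by simp
          have inc0: "\<forall>d\<in>darts V2 E2. \<forall>d'\<in>darts V2 E2. \<not> dart_adj d d' \<longrightarrow> A d d' = 0"
            using inc unfolding incidence_matrix_def by (elim conjE)
          have aD: "a \<in> darts V2 E2" "b \<in> darts V2 E2" using aL bL LD by auto
          have adj: "dart_adj a b"
          proof (rule ccontr)
            assume "\<not> dart_adj a b"
            then have "A a b = 0" using inc0 aD by blast
            then show False using Anz by simp
          qed
          have Pab: "P a = P b"
          proof (cases "fst a = fst b")
            case True then show ?thesis unfolding P_def by simp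
          next
            case False
            then have s: "snd a = snd b" using adj unfolding dart_adj_def by blast
            show ?thesis
            proof (cases "snd a \<in> Ec")
              case True
              have "fst a \<in> snd a" "fst b \<in> snd b" using aD unfolding darts_def by auto
              then have "phi (fst a) = phi (fst b)" using ecphi[OF True, of "fst a" "fst b"] s by simp
              then show ?thesis unfolding P_def by simp
            next
              case False
              have "snd a \<notin> Ed" "snd b \<notin> Ed" using noEd aL bL by blast+
              then have "a \<notin> K" "b \<notin> K" using False s unfolding K_def by simp_all
              then have "a \<in> {i, j}" "b \<in> {i, j}" using aL bL unfolding L_def by simp_all
              then have "snd i = snd j" using ab s by blast
              then show ?thesis using neq by simp
            qed
          qed
          then show "P (g (2*k)) = P (g (2*k+1))" unfolding a_def b_def .
        qed
        have ev1: "even (card {t. t < 2*n \<and> P (g t)})" by (rule even_card_pairs[OF block])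
        have "{l \<in> L. P l} = g ` {t. t < 2*n \<and> P (g t)}" unfolding gim[symmetric] by blast
        moreover have "inj_on g {t. t < 2*n \<and> P (g t)}" by (rule inj_on_subset[OF ginj]) auto
        ultimately have ev2: "even (card {l \<in> L. P l})" using ev1 by (simp add: card_image)
        define D where "D = {d \<in> darts V2 E2. snd d \<in> Ec \<and> P d}"
        have iK: "i \<notin> K" "j \<notin> K" using i j unfolding K_def Kbar_def by auto
        have "{l \<in> L. P l} = insert i D"
        proof
          show "{l \<in> L. P l} \<subseteq> insert i D"
          proof
            fix l assume l: "l \<in> {l \<in> L. P l}"
            show "l \<in> insert i D"
            proof (cases "l \<in> K")
              case True then show ?thesis using noEd l unfolding D_def K_def by auto
            next
              case False
              then have "l = i \<or> l = j" using l unfolding L_def by auto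
              then show ?thesis using l neq unfolding P_def by auto
            qed
          qed
        next
          show "insert i D \<subseteq> {l \<in> L. P l}"
            unfolding D_def L_def K_def P_def by auto
        qed
        moreover have "i \<notin> D" using i unfolding D_def Kbar_def by auto
        moreover have finDD: "finite D" using finD unfolding D_def by auto
        ultimately have cD: "card {l \<in> L. P l} = Suc (card D)" by simp
        define Ec' where "Ec' = {c \<in> Ec. \<exists>v\<in>c. phi v = phi (fst i)}"
        have finEc': "finite Ec'" using finE2 Ec unfolding Ec'_def by (auto intro: finite_subset)
        have DS: "D = (\<lambda>(c, v). (v, c)) ` (SIGMA c:Ec'. c)"
        proof
          show "D \<subseteq> (\<lambda>(c, v). (v, c)) ` (SIGMA c:Ec'. c)"
          proof
            fix d assume "d \<in> D"
            then obtain v c where d: "d = (v, c)" "c \<in> Ec" "v \<in> c" "phi v = phi (fst i)"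
              unfolding D_def darts_def P_def by auto
            then have "(c, v) \<in> (SIGMA c:Ec'. c)" unfolding Ec'_def by auto
            then show "d \<in> (\<lambda>(c, v). (v, c)) ` (SIGMA c:Ec'. c)" using d by force
          qed
        next
          show "(\<lambda>(c, v). (v, c)) ` (SIGMA c:Ec'. c) \<subseteq> D"
          proof
            fix d assume "d \<in> (\<lambda>(c, v). (v, c)) ` (SIGMA c:Ec'. c)"
            then obtain c v where d: "d = (v, c)" "c \<in> Ec'" "v \<in> c" by auto
            then obtain w where w: "w \<in> c" "phi w = phi (fst i)" "c \<in> Ec" unfolding Ec'_def by auto
            have "phi v = phi (fst i)" using ecphi[OF w(3) d(3) w(1)] w by simp
            moreover have "v \<in> V2" "c \<in> E2" using d w Ec E2sub by auto
            ultimately show "d \<in> D" using d w unfolding D_def darts_def P_def by auto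
          qed
        qed
        have "inj_on (\<lambda>(c, v). (v, c)) (SIGMA c:Ec'. c)" by (auto simp: inj_on_def)
        then have "card D = card (SIGMA c:Ec'. c)" using DS by (simp add: card_image)
        also have "\<dots> = (\<Sum>c\<in>Ec'. card c)"
          using finEc' finV2 E2sub Ec unfolding Ec'_def by (intro card_SigmaI) (auto intro: finite_subset)
        also have "\<dots> = (\<Sum>c\<in>Ec'. 2)"
        proof (rule sum.cong)
          fix c assume "c \<in> Ec'"
          then obtain a b where "a \<noteq> b" "c = {a, b}" using E2e Ec unfolding Ec'_def by blast
          then show "card c = 2" by simp
        qed simp
        finally have "even (card D)" by simp
        then show False using cD ev2 by simp
      qed
    qed
  qed
  have inc1: "incidence_matrix V1 E1
           (\<lambda>d d'. pf_reduced r A K (inv_into Kbar f d) (inv_into Kbar f d'))"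
    unfolding incidence_matrix_def
  proof (intro conjI ballI impI)
    fix d d' assume "d \<in> darts V1 E1" "d' \<in> darts V1 E1"
    show "pf_reduced r A K (inv_into Kbar f d) (inv_into Kbar f d') =
          - pf_reduced r A K (inv_into Kbar f d') (inv_into Kbar f d)"
      by (rule pf_reduced_antisym)
  next
    fix d d' assume d: "d \<in> darts V1 E1" and d': "d' \<in> darts V1 E1" and na: "\<not> dart_adj d d'"
    define i where "i = inv_into Kbar f d"
    define j where "j = inv_into Kbar f d'"
    have ij: "i \<in> Kbar" "f i = d" "j \<in> Kbar" "f j = d'"
      using inv1a[OF d] inv1a[OF d'] inv1b[OF d] inv1b[OF d'] unfolding i_def j_def by auto
    show "pf_reduced r A K (inv_into Kbar f d) (inv_into Kbar f d') = 0"
    proof (cases "d = d'")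
      case True then show ?thesis unfolding pf_reduced_def by simp
    next
      case False
      then have nn: "fst d \<noteq> fst d'" "snd d \<noteq> snd d'" using na unfolding dart_adj_def by auto
      have "phi (fst i) = fst d" "phi ` (snd i) = snd d" "phi (fst j) = fst d'" "phi ` (snd j) = snd d'"
        using ij unfolding f_def by (auto split: prod.splits)
      then have n2: "phi (fst i) \<noteq> phi (fst j)" "snd i \<noteq> snd j" using nn by auto
      have "pf r A (K \<union> {i, j}) = 0" by (rule main[OF ij(1) ij(3) n2])
      then show ?thesis unfolding pf_reduced_def i_def[symmetric] j_def[symmetric]
        by simp
    qed
  qed
  show ?thesis using bij inc1 by simp
qed

end
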